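(* Let $\chi$ be a kernel satisfying $(\chi_1)$ and $(\chi_2)$ with $\eta>0$. Let $f:\mathbb{R}_+\to\mathbb{R}_+$ be bounded. Then $\lim_{w\to\infty}MG^{\chi}_w(f,x)=f(x)$ at every point $x\in\mathbb{R}_+$ at which $f$ is log-continuous. Moreover, if $f\in\mathcal{UB}^{\bar\omega}_+(\mathbb{R}_+)$, then $\lim_{w\to\infty}\|MG^{\chi}_w f-f\|_{\bar\omega}=0$.
   Context: $\mathbb{R}_+$ denotes the positive reals; $\bigvee_{k\in\Lambda}T_k=\sup\{T_k:k\in\Lambda\}$. A kernel is a bounded measurable $\chi:\mathbb{R}_+\to\mathbb{R}$. Moments: $m_{\nu}(\chi)=\sup_{u>0}\bigvee_{k\in\mathbb{Z}}|\chi(e^{-k}u)||k-\log u|^{\nu}$. Condition $(\chi_1)$: $m_2(\chi)<\infty$. Condition $(\chi_2)$: $\eta:=\inf_{x\in[1,e]}\chi(x)$ exists. Weight $\bar\omega(x)=\frac1{1+\log^2x}$, $\|f\|_{\bar\omega}=\sup_{x>0}\bar\omega(x)|f(x)|$. A function $g:\mathbb{R}_+\to\mathbb{R}$ is log-uniformly continuous if for every $\epsilon>0$ there is $\delta>0$ with $|g(x)-g(y)|<\epsilon$ whenever $|\log x-\log y|\le\delta$; $f$ is log-continuous at $x$ if for every $\epsilon>0$ there is $\delta>0$ with $|f(y)-f(x)|<\epsilon$ whenever $|\log y-\log x|\le \delta$. $\mathcal{UB}^{\bar\omega}_+(\mathbb{R}_+)$ is the set of nonnegative $f:\mathbb{R}_+\to\mathbb{R}$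 such that $\bar\omega f$ is bounded and log-uniformly continuous. Operator: $MG^{\chi}_w(f,x)=\frac{\bigvee_{k\in\mathbb{Z}}\chi(e^{-k}x^{w})f(e^{k/w})}{\bigvee_{k\in\mathbb{Z}}\chi(e^{-k}x^{w})}$. *)

theory Defs
  imports "HOL-Analysis.Analysis"
begin

definition is_kernel :: "(real \<Rightarrow> real) \<Rightarrow> bool" where
  "is_kernel K \<longleftrightarrow> (\<exists>B. \<forall>x>0. \<bar>K x\<bar> \<le> B) \<and> set_borel_measurable borel {0<..} K"

definition moment_finite :: "real \<Rightarrow> (real \<Rightarrow> real) \<Rightarrow> bool" where
  "moment_finite \<nu> K \<longleftrightarrow>
     (\<exists>M. \<forall>u>0. \<forall>k::int. \<bar>K (exp (- real_of_int k) * u)\<bar> * \<bar>real_of_int k - ln u\<bar> powr \<nu> \<le> M)"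

definition kernel_eta :: "(real \<Rightarrow> real) \<Rightarrow> real" where
  "kernel_eta K = Inf (K ` {1..exp 1})"

definition omega_bar :: "real \<Rightarrow> real" where
  "omega_bar x = 1 / (1 + (ln x)\<^sup>2)"

definition omega_norm :: "(real \<Rightarrow> real) \<Rightarrow> real" where
  "omega_norm f = (SUP x\<in>{0<..}. omega_bar x * \<bar>f x\<bar>)"

definition log_uniformly_continuous :: "(real \<Rightarrow> real) \<Rightarrow> bool" where
  "log_uniformly_continuous g \<longleftrightarrow>
     (\<forall>\<epsilon>>0. \<exists>\<delta>>0. \<forall>x>0. \<forall>y>0. \<bar>ln x - ln y\<bar> \<le> \<delta> \<longrightarrow> \<bar>g x - g y\<bar> < \<epsilon>)"

definition log_continuous_at :: "(real \<Rightarrow> real) \<Rightarrow> real \<Rightarrow> bool" where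
  "log_continuous_at f x \<longleftrightarrow>
     (\<forall>\<epsilon>>0. \<exists>\<delta>>0. \<forall>y>0. \<bar>ln y - ln x\<bar> \<le> \<delta> \<longrightarrow> \<bar>f y - f x\<bar> < \<epsilon>)"

definition UB_omega_plus :: "(real \<Rightarrow> real) set" where
  "UB_omega_plus = {f. (\<forall>x>0. f x \<ge> 0) \<and> (\<exists>B. \<forall>x>0. \<bar>omega_bar x * f x\<bar> \<le> B)
       \<and> log_uniformly_continuous (\<lambda>x. omega_bar x * f x)}"

definition MG :: "(real \<Rightarrow> real) \<Rightarrow> real \<Rightarrow> (real \<Rightarrow> real) \<Rightarrow> real \<Rightarrow> real" where
  "MG K w f x =
     (SUP k::int. K (exp (- real_of_int k) * x powr w) * f (exp (real_of_int k / w)))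
     / (SUP k::int. K (exp (- real_of_int k) * x powr w))"

end

theory Submission
  imports Defs 
begin

lemma sup_est:
  fixes a g :: "int \<Rightarrow> real"
  assumes aB: "\<And>k. \<bar>a k\<bar> \<le> B" and k0: "a k0 \<ge> \<eta>" and eta: "\<eta> > 0" and c: "c \<ge> 0"
    and E: "\<And>k. \<bar>a k\<bar> * \<bar>g k - c\<bar> \<le> E"
  shows "\<bar>(SUP k. a k * g k) / (SUP k. a k) - c\<bar> \<le> E / \<eta>"
proof -
  define D where "D = (SUP k. a k)"
  define N where "N = (SUP k. a k * g k)"
  have bdA: "bdd_above (range a)" using aB by (intro bdd_aboveI[of _ B]) (auto simp: abs_le_iff)
  have aD: "a k \<le> D" for k unfolding D_def by (rule cSUP_upper[OF UNIV_I bdA])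
  have D: "\<eta> \<le> D" using aD[of k0] k0 by simp
  have le1: "a k * g k \<le> c * a k + E" for k
  proof -
    have "a k * g k - c * a k = a k * (g k - c)" by (simp add: algebra_simps)
    also have "\<dots> \<le> \<bar>a k\<bar> * \<bar>g k - c\<bar>" by (metis abs_ge_self abs_mult)
    finally show ?thesis using E[of k] by linarith
  qed
  have le2: "c * a k \<le> a k * g k + E" for k
  proof -
    have "c * a k - a k * g k = - (a k * (g k - c))" by (simp add: algebra_simps)
    also have "\<dots> \<le> \<bar>a k\<bar> * \<bar>g k - c\<bar>" by (metis abs_ge_minus_self abs_mult)
    finally show ?thesis using E[of k] by linarith
  qed
  have bdN: "bdd_above (range (\<lambda>k. a k * g k))"
  proof (intro bdd_aboveI[of _ "c * B + E"], clarify)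
    fix k
    have "c * a k \<le> c * B" using aB[of k] c by (intro mult_left_mono) (auto simp: abs_le_iff)
    thus "a k * g k \<le> c * B + E" using le1[of k] by linarith
  qed
  have aN: "a k * g k \<le> N" for k unfolding N_def by (rule cSUP_upper[OF UNIV_I bdN])
  have up: "N \<le> c * D + E" unfolding N_def
  proof (rule cSUP_least, simp)
    fix k
    have "c * a k \<le> c * D" using aD[of k] c by (intro mult_left_mono) auto
    thus "a k * g k \<le> c * D + E" using le1[of k] by linarith
  qed
  have low: "c * D \<le> N + E"
  proof (cases "c = 0")
    case True
    then show ?thesis using le2[of k0] aN[of k0] by simp
  next
    case False
    hence cp: "c > 0" using c by simp
    have "D \<le> (N + E) / c" unfolding D_def
    proof (rule cSUP_least, simp)
      fix k
      have "c * a k \<le> N + E" using le2[of k] aN[of k] by linarith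
      thus "a k \<le> (N + E) / c" using cp by (simp add: field_simps)
    qed
    thus ?thesis using cp by (simp add: field_simps)
  qed
  have Dp: "D > 0" using D eta by simp
  have E0: "E \<ge> 0" using E[of k0] by (smt (verit) abs_ge_zero mult_nonneg_nonneg)
  have "\<bar>N / D - c\<bar> = \<bar>N - c * D\<bar> / D" using Dp by (simp add: field_simps)
  also have "\<dots> \<le> E / D" using up low Dp by (intro divide_right_mono) auto
  also have "\<dots> \<le> E / \<eta>" using E0 D eta by (intro divide_left_mono) auto
  finally show ?thesis unfolding N_def D_def .
qed

lemma kernel_facts:
  assumes "is_kernel K" "moment_finite 2 K" "kernel_eta K > 0"
  obtains B M where "B \<ge> 0" "M \<ge> 0" "\<And>y. y>0 \<Longrightarrow> \<bar>K y\<bar> \<le> B"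
   "\<And>u k. u>0 \<Longrightarrow> \<bar>K (exp (- real_of_int k) * u)\<bar> * (real_of_int k - ln u)^2 \<le> M"
   "\<And>y. y \<in> {1..exp 1} \<Longrightarrow> K y \<ge> kernel_eta K"
proof -
  obtain B where B: "\<And>y. y>0 \<Longrightarrow> \<bar>K y\<bar> \<le> B" using assms(1) unfolding is_kernel_def by auto
  obtain M where M: "\<And>u k. u>0 \<Longrightarrow> \<bar>K (exp (- real_of_int k) * u)\<bar> * \<bar>real_of_int k - ln u\<bar> powr 2 \<le> M"
    using assms(2) unfolding moment_finite_def by auto
  have B0: "B \<ge> 0" using B[of 1] by simp
  have M0: "M \<ge> 0" using M[of 1 0] by (smt (verit) abs_ge_zero powr_ge_zero mult_nonneg_nonneg)
  have M': "\<bar>K (exp (- real_of_int k) * u)\<bar> * (real_of_int k - ln u)^2 \<le> M" if "u > 0" for u k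
  proof -
    have "\<bar>real_of_int k - ln u\<bar> powr 2 = (real_of_int k - ln u)^2"
      by (subst powr_numeral) auto
    thus ?thesis using M[OF that, of k] by simp
  qed
  have bb: "bdd_below (K ` {1..exp 1})"
    by (rule bdd_belowI[of _ "-B"]) (use B in \<open>smt (verit) atLeastAtMost_iff image_iff exp_gt_zero one_le_exp_iff\<close>)
  have "K y \<ge> kernel_eta K" if "y \<in> {1..exp 1}" for y
    unfolding kernel_eta_def by (rule cInf_lower) (use that bb in auto)
  thus ?thesis using that B0 M0 B M' by blast
qed


lemma C_tendsto: "((\<lambda>w::real. C / w^2) \<longlongrightarrow> 0) at_top"
  by (intro tendsto_divide_0[OF tendsto_const] filterlim_at_top_imp_at_infinity filterlim_pow_at_top filterlim_ident) simp

lemma exists_k0: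
  assumes "x > 0"
  shows "\<exists>k0::int. exp (- real_of_int k0) * x powr w \<in> {1..exp 1}"
proof -
  define L where "L = w * ln x"
  define k0 where "k0 = floor L"
  have e: "exp (- real_of_int k0) * x powr w = exp (L - real_of_int k0)"
    using assms by (simp add: powr_def L_def exp_diff field_simps exp_minus)
  have "0 \<le> L - real_of_int k0" "L - real_of_int k0 \<le> 1" unfolding k0_def by linarith+
  hence "exp (L - real_of_int k0) \<in> {1..exp 1}" by auto
  thus ?thesis using e by metis
qed

lemma far_bound:
  fixes A w d \<delta> M :: real
  assumes "A * (w*d)^2 \<le> M" "\<delta> > 0" "\<bar>d\<bar> > \<delta>" "w > 0" "A \<ge> 0"
  shows "A \<le> M / (w*\<delta>)^2" "A * d^2 \<le> M / w^2"
proof -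
  have "w*\<delta> \<le> \<bar>w*d\<bar>" using assms by (simp add: abs_mult)
  hence "(w*\<delta>)^2 \<le> \<bar>w*d\<bar>^2" using assms by (intro power_mono) auto
  hence "(w*\<delta>)^2 \<le> (w*d)^2" by simp
  hence "A * (w*\<delta>)^2 \<le> M" using assms by (meson mult_left_mono order_trans)
  moreover have "(w*\<delta>)^2 > 0" using assms by simp
  ultimately show "A \<le> M / (w*\<delta>)^2" by (simp add: field_simps)
  show "A * d^2 \<le> M / w^2" using assms(1,4) by (simp add: field_simps power_mult_distrib)
qed

lemma part1:
  fixes K f :: "real \<Rightarrow> real"
  assumes B: "\<And>y. y>0 \<Longrightarrow> \<bar>K y\<bar> \<le> B" and B0: "B \<ge> 0" and M0: "M \<ge> 0"
    and Mm: "\<And>u k. u>0 \<Longrightarrow> \<bar>K (exp (- real_of_int k) * u)\<bar> * (real_of_int k - ln u)^2 \<le> M"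
    and eta: "\<And>y. y \<in> {1..exp 1} \<Longrightarrow> K y \<ge> \<eta>" and etap: "\<eta> > 0"
    and fb: "\<And>y. y>0 \<Longrightarrow> 0 < f y \<and> f y \<le> Bf"
    and x: "x > 0" and lc: "log_continuous_at f x"
  shows "((\<lambda>w. MG K w f x) \<longlongrightarrow> f x) at_top"
proof (rule tendstoI)
  fix \<epsilon> :: real assume ep: "\<epsilon> > 0"
  define \<epsilon>' where "\<epsilon>' = \<eta>*\<epsilon>/(2*(B+1))"
  have ep': "\<epsilon>' > 0" using ep etap B0 unfolding \<epsilon>'_def by simp
  have Bep: "B * \<epsilon>' \<le> \<eta>*\<epsilon>/2"
  proof -
    have "B * \<epsilon>' \<le> (B+1) * \<epsilon>'" using ep' by simp
    also have "\<dots> = \<eta>*\<epsilon>/2" unfolding \<epsilon>'_def using B0 by (simp add: field_simps)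
    finally show ?thesis .
  qed
  obtain \<delta> where dp: "\<delta> > 0" and hd: "\<And>y. y>0 \<Longrightarrow> \<bar>ln y - ln x\<bar> \<le> \<delta> \<Longrightarrow> \<bar>f y - f x\<bar> < \<epsilon>'"
    using lc ep' unfolding log_continuous_at_def by blast
  define C where "C = M*Bf/\<delta>^2"
  have "eventually (\<lambda>w. C/w^2 < \<eta>*\<epsilon>/2) at_top"
    by (rule order_tendstoD[OF C_tendsto]) (use ep etap in simp)
  moreover have "eventually (\<lambda>w::real. w > 0) at_top" by (rule eventually_gt_at_top)
  ultimately show "eventually (\<lambda>w. dist (MG K w f x) (f x) < \<epsilon>) at_top"
  proof eventually_elim
    case (elim w)
    define a where "a k = K (exp (- real_of_int k) * x powr w)" for k
    define g where "g k = f (exp (real_of_int k / w))" for k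
    have MGe: "MG K w f x = (SUP k. a k * g k)/(SUP k. a k)" unfolding MG_def a_def g_def ..
    have est: "\<bar>a k\<bar> * \<bar>g k - f x\<bar> \<le> B*\<epsilon>' + C/w^2" for k
    proof -
      define d where "d = real_of_int k / w - ln x"
      have aB: "\<bar>a k\<bar> \<le> B" unfolding a_def using x by (intro B) simp
      have am: "\<bar>a k\<bar> * (w*d)^2 \<le> M"
      proof -
        have "real_of_int k - ln (x powr w) = w*d" unfolding d_def using elim by (simp add: field_simps)
        thus ?thesis using Mm[of "x powr w" k] x unfolding a_def by simp
      qed
      have C0: "C/w^2 \<ge> 0" unfolding C_def using M0 fb[OF x] by simp
      have Be: "B*\<epsilon>' \<ge> 0" using B0 ep' by simp
      show ?thesis
      proof (cases "\<bar>d\<bar> \<le> \<delta>")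
        case True
        have "\<bar>g k - f x\<bar> \<le> \<epsilon>'" unfolding g_def using hd[of "exp (real_of_int k / w)"] True
          unfolding d_def by simp
        hence "\<bar>a k\<bar> * \<bar>g k - f x\<bar> \<le> B * \<epsilon>'" using aB by (intro mult_mono) auto
        thus ?thesis using C0 by linarith
      next
        case False
        have a1: "\<bar>a k\<bar> \<le> M / (w*\<delta>)^2" using far_bound(1)[OF am dp _ elim(2)] False by simp
        have gb: "\<bar>g k - f x\<bar> \<le> Bf" unfolding g_def using fb[OF x] fb[of "exp (real_of_int k / w)"] by force
        have "\<bar>a k\<bar> * \<bar>g k - f x\<bar> \<le> M / (w*\<delta>)^2 * Bf" using a1 gb by (intro mult_mono) auto
        also have "\<dots> = C/w^2" unfolding C_def by (simp add: field_simps power_mult_distrib)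
        finally show ?thesis using Be by linarith
      qed
    qed
    obtain k0 where k0: "exp (- real_of_int k0) * x powr w \<in> {1..exp 1}" using exists_k0[OF x] by blast
    have "\<bar>MG K w f x - f x\<bar> \<le> (B*\<epsilon>' + C/w^2) / \<eta>"
      unfolding MGe
    proof (rule sup_est[OF _ _ etap _ est])
      show "\<bar>a k\<bar> \<le> B" for k unfolding a_def using x by (intro B) simp
      show "\<eta> \<le> a k0" unfolding a_def using eta k0 by blast
      show "0 \<le> f x" using fb x by (simp add: less_imp_le)
    qed
    also have "\<dots> < \<epsilon>"
    proof -
      have "B*\<epsilon>' + C/w^2 < \<eta>*\<epsilon>" using Bep elim(1) by linarith
      thus ?thesis using etap by (simp add: field_simps)
    qed
    finally show ?case by (simp add: dist_real_def)
  qed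
qed


lemma wineq:
  fixes ht hx z d Bh :: real
  assumes "0 \<le> ht" "ht \<le> Bh"
  shows "\<bar>ht*(1+(z+d)^2)/(1+z^2) - hx\<bar> \<le> \<bar>ht - hx\<bar> + Bh*(\<bar>d\<bar> + d^2)"
proof -
  have pos: "1+z^2 > 0" by (simp add: add_pos_nonneg)
  define q where "q = (2*z*d + d^2)/(1+z^2)"
  have eq: "ht*(1+(z+d)^2)/(1+z^2) - hx = (ht - hx) + ht*q"
    using pos unfolding q_def by (simp add: field_simps power2_eq_square)
  have s2: "2*\<bar>z\<bar> \<le> 1+z^2"
    using zero_le_power2[of "\<bar>z\<bar> - 1"] by (simp add: power2_eq_square algebra_simps)
  have "\<bar>2*z*d + d^2\<bar> \<le> 2*\<bar>z\<bar>*\<bar>d\<bar> + d^2" 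
  proof -
    have "\<bar>2*z*d\<bar> = 2*\<bar>z\<bar>*\<bar>d\<bar>" by (simp add: abs_mult)
    moreover have "\<bar>d^2\<bar> = d^2" by simp
    ultimately show ?thesis using abs_triangle_ineq[of "2*z*d" "d^2"] by linarith
  qed
  also have "\<dots> \<le> (1+z^2)*\<bar>d\<bar> + (1+z^2)*d^2"
  proof (rule add_mono)
    show "2*\<bar>z\<bar>*\<bar>d\<bar> \<le> (1+z^2)*\<bar>d\<bar>" using s2 by (intro mult_right_mono) auto
    have "1*d^2 \<le> (1+z^2)*d^2" by (intro mult_right_mono) auto
    thus "d^2 \<le> (1+z^2)*d^2" by simp
  qed
  finally have "\<bar>2*z*d + d^2\<bar> \<le> (1+z^2)*(\<bar>d\<bar> + d^2)" by (simp add: algebra_simps)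
  hence qb: "\<bar>q\<bar> \<le> \<bar>d\<bar> + d^2" unfolding q_def using pos by (simp add: abs_divide pos_divide_le_eq mult_ac)
  have "\<bar>ht*q\<bar> \<le> Bh*(\<bar>d\<bar> + d^2)" 
  proof -
    have "\<bar>ht*q\<bar> = ht*\<bar>q\<bar>" using assms(1) by (simp add: abs_mult)
    also have "\<dots> \<le> Bh*(\<bar>d\<bar> + d^2)" using assms qb by (intro mult_mono) auto
    finally show ?thesis .
  qed
  thus ?thesis unfolding eq by linarith
qed


lemma part2:
  fixes K f :: "real \<Rightarrow> real"
  assumes B: "\<And>y. y>0 \<Longrightarrow> \<bar>K y\<bar> \<le> B" and B0: "B \<ge> 0" and M0: "M \<ge> 0"
    and Mm: "\<And>u k. u>0 \<Longrightarrow> \<bar>K (exp (- real_of_int k) * u)\<bar> * (real_of_int k - ln u)^2 \<le> M"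
    and eta: "\<And>y. y \<in> {1..exp 1} \<Longrightarrow> K y \<ge> \<eta>" and etap: "\<eta> > 0"
    and fU: "f \<in> UB_omega_plus"
  shows "((\<lambda>w. omega_norm (\<lambda>x. MG K w f x - f x)) \<longlongrightarrow> 0) at_top"
proof (rule tendstoI)
  fix \<epsilon> :: real assume ep: "\<epsilon> > 0"
  define h where "h = (\<lambda>x. omega_bar x * f x)"
  have fU': "(\<forall>x>0. f x \<ge> 0) \<and> (\<exists>B. \<forall>x>0. \<bar>omega_bar x * f x\<bar> \<le> B)
       \<and> log_uniformly_continuous (\<lambda>x. omega_bar x * f x)" using fU unfolding UB_omega_plus_def by blast
  have f0: "\<And>x. x>0 \<Longrightarrow> f x \<ge> 0" using fU' by blast
  obtain Bh where Bh0': "\<forall>x>0. \<bar>omega_bar x * f x\<bar> \<le> Bh" using fU' by blast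
  have Bh: "\<And>x. x>0 \<Longrightarrow> \<bar>h x\<bar> \<le> Bh" using Bh0' unfolding h_def by blast
  have luc: "log_uniformly_continuous h" using fU' unfolding h_def by blast
  have Bh0: "Bh \<ge> 0" using Bh[of 1] by simp
  have om: "omega_bar x > 0" for x unfolding omega_bar_def by (simp add: add_pos_nonneg)
  have h0: "0 \<le> h x" "h x \<le> Bh" if "x > 0" for x
    using f0[OF that] om[of x] Bh[OF that] unfolding h_def by auto
  have fh: "f x = h x * (1 + (ln x)^2)" for x
  proof -
    have "1 + (ln x)^2 > 0" by (simp add: add_pos_nonneg)
    thus ?thesis unfolding h_def omega_bar_def by simp
  qed
  define Q where "Q = (B+1)*(1+2*Bh)"
  have Q: "Q > 0" unfolding Q_def using B0 Bh0 by simp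
  define \<epsilon>' where "\<epsilon>' = \<eta>*\<epsilon>/(2*Q)"
  have ep': "\<epsilon>' > 0" using ep etap Q unfolding \<epsilon>'_def by simp
  have Bep: "B * (\<epsilon>'*(1+2*Bh)) \<le> \<eta>*\<epsilon>/2"
  proof -
    have "B * (\<epsilon>'*(1+2*Bh)) \<le> (B+1) * (\<epsilon>'*(1+2*Bh))" using ep' Bh0 by simp
    also have "\<dots> = Q * \<epsilon>'" by (simp add: Q_def algebra_simps)
    also have "\<dots> = \<eta>*\<epsilon>/2"
    proof -
      have gen: "q * (c / (2 * q)) = c / 2" if "q > 0" for q c :: real using that by simp
      show ?thesis unfolding \<epsilon>'_def using gen[OF Q, of "\<eta>*\<epsilon>"] by (simp add: mult.assoc)
    qed
    finally show ?thesis .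
  qed
  have "\<exists>\<delta>>0. \<forall>x>0. \<forall>y>0. \<bar>ln x - ln y\<bar> \<le> \<delta> \<longrightarrow> \<bar>h x - h y\<bar> < \<epsilon>'"
    using luc ep' unfolding log_uniformly_continuous_def by (elim allE impE) 
  then obtain \<delta>0 where dp0: "\<delta>0 > 0"
    and hd0: "\<forall>x>0. \<forall>y>0. \<bar>ln x - ln y\<bar> \<le> \<delta>0 \<longrightarrow> \<bar>h x - h y\<bar> < \<epsilon>'" by (elim exE conjE)
  have hd: "\<bar>h x - h y\<bar> < \<epsilon>'" if "x>0" "y>0" "\<bar>ln x - ln y\<bar> \<le> \<delta>0" for x y
    using hd0 that by simp
  define \<delta> where "\<delta> = min \<delta>0 (min \<epsilon>' 1)"
  have dp: "\<delta> > 0" "\<delta> \<le> \<delta>0" "\<delta> \<le> \<epsilon>'" "\<delta> \<le> 1" using dp0 ep' unfolding \<delta>_def by simp_all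
  define C where "C = 2*Bh*M*(1/\<delta>^2 + 1)"
  have C0: "C \<ge> 0" unfolding C_def using Bh0 M0 by simp
  have "eventually (\<lambda>w. C/w^2 < \<eta>*\<epsilon>/2) at_top"
    by (rule order_tendstoD[OF C_tendsto]) (use ep etap in simp)
  moreover have "eventually (\<lambda>w::real. w > 0) at_top" by (rule eventually_gt_at_top)
  ultimately show "eventually (\<lambda>w. dist (omega_norm (\<lambda>x. MG K w f x - f x)) 0 < \<epsilon>) at_top"
  proof eventually_elim
    case (elim w)
    define E where "E = B * (\<epsilon>'*(1+2*Bh)) + C/w^2"
    have Elt: "E / \<eta> < \<epsilon>"
    proof -
      have "E < \<eta>*\<epsilon>" using Bep elim(1) unfolding E_def by linarith
      thus ?thesis using etap by (simp add: field_simps)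
    qed
    have pt: "omega_bar x * \<bar>MG K w f x - f x\<bar> \<le> E / \<eta>" if x: "x > 0" for x
    proof -
      define a where "a k = K (exp (- real_of_int k) * x powr w)" for k
      define g where "g k = f (exp (real_of_int k / w))" for k
      have MGe: "MG K w f x = (SUP k. a k * g k)/(SUP k. a k)" unfolding MG_def a_def g_def ..
      have est0: "\<bar>a k\<bar> * (omega_bar x * \<bar>g k - f x\<bar>) \<le> E" for k
      proof -
        define d where "d = real_of_int k / w - ln x"
        define t where "t = exp (real_of_int k / w)"
        have tp: "t > 0" unfolding t_def by simp
        have lnt: "ln t = ln x + d" unfolding t_def d_def by simp
        have aB: "\<bar>a k\<bar> \<le> B" unfolding a_def using x by (intro B) simp
        have am: "\<bar>a k\<bar> * (w*d)^2 \<le> M"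
        proof -
          have "real_of_int k - ln (x powr w) = w*d" unfolding d_def using elim by (simp add: field_simps)
          thus ?thesis using Mm[of "x powr w" k] x unfolding a_def by simp
        qed
        have Wdef: "omega_bar x * \<bar>g k - f x\<bar> = \<bar>h t*(1+(ln x + d)^2)/(1+(ln x)^2) - h x\<bar>"
        proof -
          have p: "1 + (ln x)^2 > 0" by (simp add: add_pos_nonneg)
          have "omega_bar x * \<bar>g k - f x\<bar> = \<bar>omega_bar x * f t - h x\<bar>"
            unfolding g_def t_def h_def using om[of x] by (metis abs_mult abs_of_pos right_diff_distrib)
          also have "omega_bar x * f t = h t*(1+(ln x + d)^2)/(1+(ln x)^2)"
            unfolding fh[of t] lnt omega_bar_def by simp
          finally show ?thesis .
        qed
        have W: "omega_bar x * \<bar>g k - f x\<bar> \<le> \<bar>h t - h x\<bar> + Bh*(\<bar>d\<bar> + d^2)"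
          unfolding Wdef by (rule wineq) (use h0 tp in auto)
        have E1: "B * (\<epsilon>'*(1+2*Bh)) \<ge> 0" using B0 ep' Bh0 by simp
        have E2: "C/w^2 \<ge> 0" using C0 by simp
        have W0: "omega_bar x * \<bar>g k - f x\<bar> \<ge> 0" using om[of x] by simp
        show ?thesis
        proof (cases "\<bar>d\<bar> \<le> \<delta>")
          case True
          have "\<bar>h t - h x\<bar> < \<epsilon>'" using hd[OF tp x] True dp lnt by simp
          moreover have "\<bar>d\<bar> + d^2 \<le> 2*\<epsilon>'"
          proof -
            have "d^2 = \<bar>d\<bar>*\<bar>d\<bar>" by (simp add: power2_eq_square abs_mult[symmetric])
            also have "\<dots> \<le> \<bar>d\<bar> * 1" using True dp by (intro mult_left_mono) auto
            finally show ?thesis using True dp by linarith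
          qed
          ultimately have Wc: "omega_bar x * \<bar>g k - f x\<bar> \<le> \<epsilon>' + Bh*(2*\<epsilon>')"
            using W Bh0 by (smt (verit) mult_left_mono)
          have "\<bar>a k\<bar> * (omega_bar x * \<bar>g k - f x\<bar>) \<le> B * (\<epsilon>'*(1+2*Bh))"
          proof -
            have "\<epsilon>' + Bh*(2*\<epsilon>') = \<epsilon>'*(1+2*Bh)" by (simp add: algebra_simps)
            hence "omega_bar x * \<bar>g k - f x\<bar> \<le> \<epsilon>'*(1+2*Bh)" using Wc by linarith
            thus ?thesis by (rule mult_mono[OF aB _ B0 W0])
          qed
          thus ?thesis using E2 unfolding E_def by linarith
        next
          case False
          have a1: "\<bar>a k\<bar> \<le> M / (w*\<delta>)^2" using far_bound(1)[OF am dp(1) _ elim(2)] False by simp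
          have a2: "\<bar>a k\<bar> * d^2 \<le> M / w^2" using far_bound(2)[OF am dp(1) _ elim(2)] False by simp
          have "\<bar>h t - h x\<bar> \<le> Bh" using h0[OF tp] h0[OF x] by linarith
          moreover have "\<bar>d\<bar> \<le> 1 + d^2"
          proof (cases "\<bar>d\<bar> \<le> 1")
            case True
            have "0 \<le> d^2" by simp
            thus ?thesis using True by linarith
          next
            case False hence "\<bar>d\<bar> * 1 \<le> \<bar>d\<bar>*\<bar>d\<bar>" by (intro mult_left_mono) auto
            moreover have "\<bar>d\<bar>*\<bar>d\<bar> = d^2" by (simp add: power2_eq_square)
            ultimately show ?thesis by linarith
          qed
          ultimately have Wb: "omega_bar x * \<bar>g k - f x\<bar> \<le> 2*Bh + 2*Bh*d^2"
          proof -
            assume h1: "\<bar>h t - h x\<bar> \<le> Bh" and h2: "\<bar>d\<bar> \<le> 1 + d^2"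
            have "Bh*(\<bar>d\<bar> + d^2) \<le> Bh*(1 + 2*d^2)" using h2 Bh0 by (intro mult_left_mono) auto
            thus ?thesis using W h1 by (simp add: algebra_simps)
          qed
          have "\<bar>a k\<bar> * (omega_bar x * \<bar>g k - f x\<bar>) \<le> \<bar>a k\<bar> * (2*Bh + 2*Bh*d^2)"
            using Wb by (intro mult_left_mono) auto
          also have "\<dots> = 2*Bh*\<bar>a k\<bar> + 2*Bh*(\<bar>a k\<bar>*d^2)" by (simp add: algebra_simps)
          also have "\<dots> \<le> 2*Bh*(M / (w*\<delta>)^2) + 2*Bh*(M/w^2)"
            using a1 a2 Bh0 by (intro add_mono mult_left_mono) auto
          also have "\<dots> = C/w^2" unfolding C_def using dp(1) elim(2)
            by (simp add: field_simps power_mult_distrib)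
          finally show ?thesis using E1 unfolding E_def by linarith
        qed
      qed
      obtain k0 where k0: "exp (- real_of_int k0) * x powr w \<in> {1..exp 1}" using exists_k0[OF x] by blast
      have est: "\<bar>a k\<bar> * \<bar>g k - f x\<bar> \<le> E / omega_bar x" for k
        using est0[of k] om[of x] by (simp add: pos_le_divide_eq mult_ac)
      have "\<bar>MG K w f x - f x\<bar> \<le> (E / omega_bar x) / \<eta>"
        unfolding MGe
      proof (rule sup_est[OF _ _ etap _ est])
        show "\<bar>a k\<bar> \<le> B" for k unfolding a_def using x by (intro B) simp
        show "\<eta> \<le> a k0" unfolding a_def using eta k0 by blast
        show "0 \<le> f x" using f0 x by simp
      qed
      thus ?thesis using om[of x] etap by (simp add: field_simps)
    qed
    define F where "F x = omega_bar x * \<bar>MG K w f x - f x\<bar>" for x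
    have on: "omega_norm (\<lambda>x. MG K w f x - f x) = (SUP x\<in>{0<..}. F x)"
      unfolding omega_norm_def F_def ..
    have Fb: "F x \<le> E/\<eta>" if "x > 0" for x unfolding F_def by (rule pt[OF that])
    have bd: "bdd_above (F ` {0<..})"
    proof (rule bdd_aboveI)
      fix y assume "y \<in> F ` {0<..}"
      then obtain x where "x > 0" "y = F x" by auto
      thus "y \<le> E/\<eta>" using Fb by simp
    qed
    have lo: "0 \<le> (SUP x\<in>{0<..}. F x)"
    proof -
      have "F 1 \<le> (SUP x\<in>{0<..}. F x)" by (rule cSUP_upper[OF _ bd]) simp
      moreover have "F 1 \<ge> 0" unfolding F_def using om[of 1] by simp
      ultimately show ?thesis by linarith
    qed
    have up: "(SUP x\<in>{0<..}. F x) \<le> E/\<eta>"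
    proof (rule cSUP_least)
      show "{0<..} \<noteq> ({}::real set)" by auto
      show "F x \<le> E/\<eta>" if "x \<in> {0<..}" for x using Fb that by simp
    qed
    have "dist (SUP x\<in>{0<..}. F x) 0 = (SUP x\<in>{0<..}. F x)" using lo by (simp add: dist_real_def)
    thus ?case unfolding on using up Elt by linarith
  qed
qed

theorem theorem3p3:
  fixes K :: "real \<Rightarrow> real"
  assumes "is_kernel K"
    and "moment_finite 2 K"
    and "kernel_eta K > 0"
  shows "(\<forall>f::real \<Rightarrow> real. (\<forall>x>0. f x > 0) \<and> (\<exists>B. \<forall>x>0. \<bar>f x\<bar> \<le> B) \<longrightarrow>
            (\<forall>x>0. log_continuous_at f x \<longrightarrow> ((\<lambda>w. MG K w f x) \<longlongrightarrow> f x) at_top))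
      \<and> (\<forall>f\<in>UB_omega_plus. ((\<lambda>w. omega_norm (\<lambda>x. MG K w f x - f x)) \<longlongrightarrow> 0) at_top)"
proof -
  obtain B M where kf: "B \<ge> 0" "M \<ge> 0" "\<And>y. y>0 \<Longrightarrow> \<bar>K y\<bar> \<le> B"
   "\<And>u k. u>0 \<Longrightarrow> \<bar>K (exp (- real_of_int k) * u)\<bar> * (real_of_int k - ln u)^2 \<le> M"
   "\<And>y. y \<in> {1..exp 1} \<Longrightarrow> K y \<ge> kernel_eta K"
    using kernel_facts[OF assms] by blast
  show ?thesis
  proof (intro conjI allI impI ballI)
    fix f :: "real \<Rightarrow> real" and x :: real
    assume fa: "(\<forall>x>0. f x > 0) \<and> (\<exists>B. \<forall>x>0. \<bar>f x\<bar> \<le> B)" and x: "x > 0" and lc: "log_continuous_at f x"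
    then obtain Bf where "\<forall>x>0. \<bar>f x\<bar> \<le> Bf" by blast
    hence fb: "\<And>y. y>0 \<Longrightarrow> 0 < f y \<and> f y \<le> Bf" using fa by force
    show "((\<lambda>w. MG K w f x) \<longlongrightarrow> f x) at_top"
      by (rule part1[OF kf(3,1,2,4,5) assms(3) fb x lc])
  next
    fix f assume fU: "f \<in> UB_omega_plus"
    show "((\<lambda>w. omega_norm (\<lambda>x. MG K w f x - f x)) \<longlongrightarrow> 0) at_top"
    proof (rule part2[of K B M "kernel_eta K" f])
      show "\<And>y. 0 < y \<Longrightarrow> \<bar>K y\<bar> \<le> B" by (fact kf(3))
      show "0 \<le> B" by (fact kf(1))
      show "0 \<le> M" by (fact kf(2))
      show "\<And>u k. 0 < u \<Longrightarrow> \<bar>K (exp (- real_of_int k) * u)\<bar> * (real_of_int k - ln u)^2 \<le> M" by (fact kf(4))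
      show "\<And>y. y \<in> {1..exp 1} \<Longrightarrow> kernel_eta K \<le> K y" by (fact kf(5))
      show "0 < kernel_eta K" by (fact assms(3))
      show "f \<in> UB_omega_plus" by (fact fU)
    qed
  qed
qed

end
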